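(* For all $w\in\mathcal W$, \[|w|^2_{H^1(\partial\widehat\Omega)}\lesssim p^2\,\widehat h^{-1}\,|w|^2_{H^{1/2}(\partial\widehat\Omega)}.\]
   Context: Single-patch parametric setting. $\widehat\Omega=(0,1)^2$, $p\ge1$. For $\delta=1,2$, $\Xi^{(\delta)}$ is a $p$-open knot vector on $[0,1]$ (end knots of multiplicity $p+1$, interior knots of multiplicity in $\{1,\dots,p\}$) with distinct breakpoints $\zeta^{(\delta)}_i$ satisfying $C_3\widehat h\le\zeta^{(\delta)}_{i+1}-\zeta^{(\delta)}_i\le\widehat h$. $\mathcal V=S[p,\Xi^{(1)}]\otimes S[p,\Xi^{(2)}]$ (tensor-product splines of degree $p$) and $\mathcal W=\{v|_{\partial\widehat\Omega}:v\in\mathcal V\}$. On $\partial\widehat\Omega$: $|w|_{H^1(\partial\widehat\Omega)}$ is the $L_2$ norm of the tangential derivative, $|w|^2_{H^{1/2}(\partial\widehat\Omega)}=\int_{\partial\widehat\Omega}\int_{\partial\widehat\Omega}\frac{|w(x)-w(y)|^2}{|x-y|^2}\,ds(x)\,ds(y)$, $\|w\|^2_{H^s}=\|w\|^2_{L_2}+|w|^2_{H^s}$. $a\lesssim b$ means $a\le cb$ with $c$ depending only on $C_3$ (and, where nested grids are used, on the constant $c_0$ below), not on $p$, $\widehat h$, $L$ or the knot vectors. *)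

theory Defs
  imports "HOL-Analysis.Analysis" "HOL-Computational_Algebra.Polynomial"
begin

text \<open>A p-open knot vector on [0,1] is encoded by its number N of elements, its
  distinct breakpoints zeta 0 = 0 < zeta 1 < ... < zeta N = 1 and the multiplicities
  m i of the interior breakpoints (end knots have multiplicity p+1).\<close>
definition open_knot_vector :: "nat \<Rightarrow> nat \<Rightarrow> (nat \<Rightarrow> real) \<Rightarrow> (nat \<Rightarrow> nat) \<Rightarrow> bool" where
  "open_knot_vector p N zeta m \<longleftrightarrow>
     N \<ge> 1 \<and> zeta 0 = 0 \<and> zeta N = 1 \<and> (\<forall>i<N. zeta i < zeta (Suc i)) \<and>
     (\<forall>i. 0 < i \<and> i < N \<longrightarrow> 1 \<le> m i \<and> m i \<le> p)"

definition spline_space :: "nat \<Rightarrow> nat \<Rightarrow> (nat \<Rightarrow> real) \<Rightarrow> (nat \<Rightarrow> nat) \<Rightarrow> (real \<Rightarrow> real) set" where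
  "spline_space p N zeta m = {f. \<exists>P :: nat \<Rightarrow> real poly.
      (\<forall>i<N. degree (P i) \<le> p \<and> (\<forall>x\<in>{zeta i..zeta (Suc i)}. f x = poly (P i) x)) \<and>
      (\<forall>i. 0 < i \<and> i < N \<longrightarrow>
         (\<forall>k \<le> p - m i. poly ((pderiv ^^ k) (P (i - 1))) (zeta i) = poly ((pderiv ^^ k) (P i)) (zeta i)))}"

definition tp_spline_space :: "nat \<Rightarrow> nat \<Rightarrow> (nat \<Rightarrow> real) \<Rightarrow> (nat \<Rightarrow> nat)
      \<Rightarrow> nat \<Rightarrow> (nat \<Rightarrow> real) \<Rightarrow> (nat \<Rightarrow> nat) \<Rightarrow> (real \<times> real \<Rightarrow> real) set" where
  "tp_spline_space p N1 z1 m1 N2 z2 m2 = {v. \<exists>(n::nat) f g.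
      (\<forall>k<n. f k \<in> spline_space p N1 z1 m1 \<and> g k \<in> spline_space p N2 z2 m2) \<and>
      (\<forall>x\<in>{0..1}. \<forall>y\<in>{0..1}. v (x, y) = (\<Sum>k<n. f k x * g k y))}"

definition edge :: "nat \<Rightarrow> real \<Rightarrow> real \<times> real" where
  "edge i t = (if i = 0 then (t, 0) else if i = 1 then (1, t) else if i = 2 then (1 - t, 1) else (0, 1 - t))"

definition bdry :: "(real \<times> real) set" where
  "bdry = (\<Union>i<4. edge i ` {0..1})"

definition trace_space :: "nat \<Rightarrow> nat \<Rightarrow> (nat \<Rightarrow> real) \<Rightarrow> (nat \<Rightarrow> nat)
      \<Rightarrow> nat \<Rightarrow> (nat \<Rightarrow> real) \<Rightarrow> (nat \<Rightarrow> nat) \<Rightarrow> (real \<times> real \<Rightarrow> real) set" where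
  "trace_space p N1 z1 m1 N2 z2 m2 =
     {w. \<exists>v\<in>tp_spline_space p N1 z1 m1 N2 z2 m2. \<forall>x\<in>bdry. w x = v x}"

definition H1_bdry_sq :: "(real \<times> real \<Rightarrow> real) \<Rightarrow> ennreal" where
  "H1_bdry_sq w = (\<Sum>i<4. \<integral>\<^sup>+ t. indicator {0..1} t * ennreal ((deriv (\<lambda>s. w (edge i s)) t)\<^sup>2) \<partial>lborel)"

definition H12_bdry_sq :: "(real \<times> real \<Rightarrow> real) \<Rightarrow> ennreal" where
  "H12_bdry_sq w = (\<Sum>i<4. \<Sum>j<4. \<integral>\<^sup>+ s. \<integral>\<^sup>+ t.
      indicator {0..1} s * indicator {0..1} t *
      ennreal ((w (edge i s) - w (edge j t))\<^sup>2 / (dist (edge i s) (edge j t))\<^sup>2) \<partial>lborel \<partial>lborel)"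

end

theory Submission
  imports Defs
begin


lemma poly_has_integral_deriv:
  fixes f :: "real poly" assumes "a \<le> b"
  shows "((\<lambda>x. poly (pderiv f) x) has_integral (poly f b - poly f a)) {a..b}"
  apply (rule fundamental_theorem_of_calculus[OF assms])
  apply (simp add: has_real_derivative_iff_has_vector_derivative[symmetric])
  by (rule has_field_derivative_at_within[OF poly_DERIV])

lemma poly_integrable: "(\<lambda>x. poly (f::real poly) x) integrable_on {a..b}"
  by (intro integrable_continuous_interval continuous_intros)

lemma int_parts:
  fixes f g :: "real poly" assumes "a \<le> b"
  shows "integral {a..b} (\<lambda>x. poly f x * poly (pderiv g) x) =
     poly (f*g) b - poly (f*g) a - integral {a..b} (\<lambda>x. poly (pderiv f) x * poly g x)"
proof -
  have "integral {a..b} (\<lambda>x. poly (pderiv (f*g)) x) = poly (f*g) b - poly (f*g) a"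
    using poly_has_integral_deriv[OF assms] by (rule integral_unique)
  moreover have "integral {a..b} (\<lambda>x. poly (pderiv (f*g)) x) =
     integral {a..b} (\<lambda>x. poly f x * poly (pderiv g) x) + integral {a..b} (\<lambda>x. poly (pderiv f) x * poly g x)"
  proof -
    have eq: "(\<lambda>x. poly (pderiv (f*g)) x) = (\<lambda>x. poly f x * poly (pderiv g) x + poly (pderiv f) x * poly g x)"
      by (auto simp: pderiv_mult algebra_simps)
    show ?thesis unfolding eq
      by (rule integral_add) (auto intro!: integrable_continuous_interval continuous_intros)
  qed
  ultimately show ?thesis by simp
qed

lemma pderiv_funpow_Suc: "(pderiv ^^ Suc k) F = (pderiv ^^ k) (pderiv F)"
  by (simp add: funpow_Suc_right del: funpow.simps)

lemma int_parts_iter: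
  fixes F :: "real poly" assumes "a \<le> b"
    and "\<forall>j<k. poly ((pderiv ^^ j) F) a = 0 \<and> poly ((pderiv ^^ j) F) b = 0"
  shows "integral {a..b} (\<lambda>x. poly q x * poly ((pderiv ^^ k) F) x) =
     (-1)^k * integral {a..b} (\<lambda>x. poly ((pderiv ^^ k) q) x * poly F x)"
  using assms(2)
proof (induction k arbitrary: q)
  case 0 then show ?case by simp
next
  case (Suc k)
  have "integral {a..b} (\<lambda>x. poly q x * poly ((pderiv ^^ Suc k) F) x)
     = integral {a..b} (\<lambda>x. poly q x * poly (pderiv ((pderiv ^^ k) F)) x)" by simp
  also have "\<dots> = - integral {a..b} (\<lambda>x. poly (pderiv q) x * poly ((pderiv ^^ k) F) x)"
    using int_parts[OF assms(1)] Suc.prems by simp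
  also have "\<dots> = - ((-1)^k * integral {a..b} (\<lambda>x. poly ((pderiv ^^ k) (pderiv q)) x * poly F x))"
    using Suc by simp
  finally show ?case by (simp add: pderiv_funpow_Suc funpow_swap1)
qed

lemma funpow_pderiv_zero: "degree (q::real poly) < k \<Longrightarrow> (pderiv ^^ k) q = 0"
proof (induction k arbitrary: q)
  case 0 then show ?case by simp
next
  case (Suc k)
  show ?case
  proof (cases "degree q = 0")
    case True
    then have "pderiv q = 0" using pderiv_eq_0_iff by blast
    moreover have z: "(pderiv ^^ k) 0 = (0::real poly)" by (induction k) (auto simp: pderiv_0)
    ultimately show ?thesis unfolding pderiv_funpow_Suc by simp
  next
    case False
    then have "degree (pderiv q) < k" using Suc.prems by (simp add: degree_pderiv)
    then show ?thesis using Suc.IH unfolding pderiv_funpow_Suc by blast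
  qed
qed

lemma degree_funpow_pderiv: "degree ((pderiv ^^ k) (q::real poly)) \<le> degree q - k"
proof (induction k)
  case (Suc k)
  have "degree ((pderiv ^^ Suc k) q) = degree ((pderiv ^^ k) q) - 1" using degree_pderiv by simp
  also have "\<dots> \<le> degree q - k - 1" using Suc by simp
  finally show ?case by simp
qed simp

lemma dvd_pderiv_power:
  fixes F :: "real poly"
  assumes "[:-a,1:]^(Suc m) dvd F" shows "[:-a,1:]^m dvd pderiv F"
proof -
  obtain r where F: "F = [:-a,1:]^(Suc m) * r" using assms unfolding dvd_def by blast
  have d1: "[:-a,1:]^m dvd [:-a,1:]^Suc m * pderiv r"
    by (intro dvd_mult2 le_imp_power_dvd) auto
  have d2: "[:-a,1:]^m dvd smult (of_nat (Suc m)) (r * [:-a,1:]^m)"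
    by (intro dvd_smult) simp
  show ?thesis unfolding F lemma_order_pderiv1 using d1 d2 by (rule dvd_add)
qed

lemma dvd_funpow_pderiv:
  fixes F :: "real poly"
  assumes "[:-a,1:]^m dvd F" "j \<le> m" shows "[:-a,1:]^(m-j) dvd (pderiv ^^ j) F"
  using assms(2)
proof (induction j)
  case 0 then show ?case using assms by simp
next
  case (Suc j)
  then have "[:-a,1:]^(Suc (m - Suc j)) dvd (pderiv ^^ j) F" using Suc_diff_Suc by auto
  then show ?case by (simp add: dvd_pderiv_power)
qed

lemma funpow_pderiv_root:
  fixes F :: "real poly"
  assumes "[:-a,1:]^m dvd F" "j < m" shows "poly ((pderiv ^^ j) F) a = 0"
proof -
  have "[:-a,1:]^(m-j) dvd (pderiv ^^ j) F" using dvd_funpow_pderiv assms by auto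
  moreover have "[:-a,1:] dvd [:-a,1:]^(m-j)" using assms(2) by (intro dvd_power) auto
  ultimately have "[:-a,1:] dvd (pderiv ^^ j) F" by (meson dvd_trans)
  then show ?thesis by (simp only: poly_eq_0_iff_dvd)
qed



lemma pderiv_Xpow_mult:
  fixes G :: "real poly"
  shows "pderiv ([:-c,1:]^Suc k * G) = [:-c,1:]^k * (smult (of_nat (Suc k)) G + [:-c,1:] * pderiv G)"
  unfolding lemma_order_pderiv1 by (simp add: power_Suc ring_distribs mult_ac del: mult_pCons_left mult_pCons_right power_Suc of_nat_Suc) (rule disjI2, rule power_Suc)

lemma L1: fixes G :: "real poly"
  shows "poly ((pderiv ^^ k) ([:-c,1:]^k * G)) c = fact k * poly G c"
proof (induction k arbitrary: G)
  case 0 then show ?case by simp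
next
  case (Suc k)
  have "poly ((pderiv ^^ Suc k) ([:-c,1:]^Suc k * G)) c
     = poly ((pderiv ^^ k) ([:-c,1:]^k * (smult (of_nat (Suc k)) G + [:-c,1:] * pderiv G))) c"
    unfolding pderiv_funpow_Suc pderiv_Xpow_mult ..
  also have "\<dots> = fact k * (of_nat (Suc k) * poly G c)" using Suc by simp
  finally show ?case by (simp add: algebra_simps)
qed

lemma L2: fixes G :: "real poly"
  shows "poly ((pderiv ^^ Suc k) ([:-c,1:]^k * G)) c = fact (Suc k) * poly (pderiv G) c"
proof (induction k arbitrary: G)
  case 0 then show ?case by simp
next
  case (Suc k)
  have "poly ((pderiv ^^ Suc (Suc k)) ([:-c,1:]^Suc k * G)) c
     = poly ((pderiv ^^ Suc k) ([:-c,1:]^k * (smult (of_nat (Suc k)) G + [:-c,1:] * pderiv G))) c"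
    unfolding pderiv_funpow_Suc[of "Suc k"] pderiv_Xpow_mult ..
  also have "\<dots> = fact (Suc k) * poly (pderiv (smult (of_nat (Suc k)) G + [:-c,1:] * pderiv G)) c"
    using Suc by simp
  also have "poly (pderiv (smult (of_nat (Suc k)) G + [:-c,1:] * pderiv G)) c = of_nat (Suc (Suc k)) * poly (pderiv G) c"
  proof -
    have pX: "pderiv [:-c,1:] = (1::real poly)" by (simp add: pderiv_pCons)
    show ?thesis by (simp add: pderiv_add pderiv_smult pderiv_mult pX algebra_simps del: mult_pCons_left mult_pCons_right)
  qed
  finally show ?case by (simp add: algebra_simps)
qed

definition Fp :: "nat \<Rightarrow> real \<Rightarrow> real \<Rightarrow> real poly" where
  "Fp n c d = [:-c,1:]^n * [:-d,1:]^(Suc n)"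

lemma Fp_c: "poly ((pderiv ^^ n) (Fp n c d)) c = fact n * (c - d)^Suc n"
  unfolding Fp_def L1 by (simp add: poly_power left_diff_distrib)

lemma Fp_c': "poly (pderiv ((pderiv ^^ n) (Fp n c d))) c = fact (Suc n) * (of_nat (Suc n) * (c - d)^n)"
proof -
  have "poly (pderiv ((pderiv ^^ n) (Fp n c d))) c = poly ((pderiv ^^ Suc n) (Fp n c d)) c" by simp
  also have "\<dots> = fact (Suc n) * poly (pderiv ([:-d,1:]^(Suc n))) c" unfolding Fp_def L2 ..
  also have "poly (pderiv ([:-d,1:]^(Suc n))) c = of_nat (Suc n) * (c - d)^n"
    unfolding pderiv_power_Suc by (simp add: poly_power pderiv_pCons)
  finally show ?thesis .
qed

lemma Fp_d: "poly ((pderiv ^^ n) (Fp n c d)) d = 0"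
proof -
  have "[:-d,1:]^Suc n dvd Fp n c d" unfolding Fp_def by (rule dvd_triv_right)
  then show ?thesis by (rule funpow_pderiv_root) simp
qed

lemma Fp_vanish: assumes "j < n" shows "poly ((pderiv ^^ j) (Fp n c d)) c = 0 \<and> poly ((pderiv ^^ j) (Fp n c d)) d = 0"
proof -
  have "[:-c,1:]^n dvd Fp n c d" "[:-d,1:]^Suc n dvd Fp n c d" unfolding Fp_def by (rule dvd_triv_left, rule dvd_triv_right)
  then show ?thesis using assms funpow_pderiv_root[of c n "Fp n c d" j] funpow_pderiv_root[of d "Suc n" "Fp n c d" j] by simp
qed

lemma Fp_degree: "degree ((pderiv ^^ n) (Fp n c d)) \<le> Suc n"
proof -
  have "degree (Fp n c d) \<le> n + Suc n" unfolding Fp_def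
    by (rule order.trans[OF degree_mult_le]) (simp only: degree_linear_power)
  then show ?thesis using degree_funpow_pderiv[of n "Fp n c d"] by linarith
qed

lemma Fp_orth:
  assumes "a \<le> b" "{c,d} = {a,b}" "degree (q::real poly) \<le> n"
  shows "integral {a..b} (\<lambda>x. poly (pderiv q) x * poly ((pderiv ^^ n) (Fp n c d)) x) = 0"
proof (cases "degree q = 0")
  case True
  then have "pderiv q = 0" using pderiv_eq_0_iff by blast
  then show ?thesis by simp
next
  case False
  have van: "\<forall>j<n. poly ((pderiv ^^ j) (Fp n c d)) a = 0 \<and> poly ((pderiv ^^ j) (Fp n c d)) b = 0"
    using Fp_vanish assms(2) by (metis doubleton_eq_iff)
  have "(pderiv ^^ n) (pderiv q) = 0"
    using False assms(3) by (intro funpow_pderiv_zero) (simp add: degree_pderiv)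
  then show ?thesis using int_parts_iter[OF assms(1) van, of "pderiv q"] by simp
qed

lemma lincomb_integral:
  fixes f g k :: "real poly"
  shows "integral {a..b} (\<lambda>x. A * poly f x + B * poly g x + C * poly k x) =
    A * integral {a..b} (poly f) + B * integral {a..b} (poly g) + C * integral {a..b} (poly k)"
  by (subst integral_add integral_mult_right, auto intro!: integrable_continuous_interval continuous_intros)+



lemma nik_endpoint:
  assumes ab: "a < b" and c: "c = a \<or> c = b" and dq: "degree (q::real poly) \<le> n"
  shows "(poly q c)^2 \<le> (Suc n)^2/(b-a) * integral {a..b} (\<lambda>x. (poly q x)^2)"
proof -
  define d where "d = (if c = a then b else a)"
  have cd: "{c,d} = {a,b}" "c \<noteq> d" using c ab by (auto simp: d_def)
  define \<kappa> where "\<kappa> = 1/(fact n * (c-d)^Suc n)"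
  define \<psi>0 where "\<psi>0 = (pderiv ^^ n) (Fp n c d)"
  define \<psi> where "\<psi> = smult \<kappa> \<psi>0"
  define \<sigma> :: real where "\<sigma> = (if c = a then -1 else 1)"
  define \<phi> where "\<phi> = smult \<sigma> (pderiv \<psi>)"
  have cdne: "c - d \<noteq> 0" using cd by simp
  have psic: "poly \<psi> c = 1" unfolding \<psi>_def \<psi>0_def \<kappa>_def using Fp_c[of n c d] cdne by simp
  have psid: "poly \<psi> d = 0" unfolding \<psi>_def \<psi>0_def using Fp_d[of n c d] by simp
  have "poly (pderiv \<psi>) c = \<kappa> * (fact (Suc n) * (of_nat (Suc n) * (c - d)^n))"
    unfolding \<psi>_def \<psi>0_def pderiv_smult using Fp_c'[of n c d] by simp
  also have "\<dots> = (Suc n)^2/(c-d)" unfolding \<kappa>_def using cdne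
    by (simp add: field_simps power2_eq_square)
  finally have dpsic: "poly (pderiv \<psi>) c = (Suc n)^2/(c-d)" .
  have phic: "poly \<phi> c = (Suc n)^2/(b-a)"
    unfolding \<phi>_def using dpsic c ab by (auto simp: \<sigma>_def d_def field_simps)
  have degphi: "degree \<phi> \<le> n"
  proof -
    have "degree \<psi> \<le> Suc n" unfolding \<psi>_def \<psi>0_def
      using Fp_degree[of n c d] degree_smult_le order.trans by blast
    then have "degree (pderiv \<psi>) \<le> n" by (simp add: degree_pderiv)
    then show ?thesis unfolding \<phi>_def using degree_smult_le order.trans by blast
  qed
  have repr: "integral {a..b} (\<lambda>x. poly r x * poly \<phi> x) = poly r c" if dr: "degree r \<le> n" for r
  proof -
    have o: "integral {a..b} (\<lambda>x. poly (pderiv r) x * poly \<psi> x) = 0"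
      using Fp_orth[OF _ cd(1) dr] ab unfolding \<psi>_def \<psi>0_def
      by (simp add: integral_mult_right mult.left_commute)
    have "integral {a..b} (\<lambda>x. poly r x * poly \<phi> x) = \<sigma> * integral {a..b} (\<lambda>x. poly r x * poly (pderiv \<psi>) x)"
      unfolding \<phi>_def by (simp add: integral_mult_right mult.left_commute)
    also have "\<dots> = \<sigma> * (poly (r*\<psi>) b - poly (r*\<psi>) a)"
      using int_parts[of a b r \<psi>] ab o by simp
    also have "\<dots> = poly r c" using c ab psic psid by (auto simp: \<sigma>_def d_def)
    finally show ?thesis .
  qed
  define A where "A = integral {a..b} (\<lambda>x. (poly q x)^2)"
  define P where "P = poly \<phi> c"
  define Q where "Q = poly q c"
  have Ppos: "P > 0" unfolding P_def phic using ab by simp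
  have e1: "poly (\<phi>*\<phi>) = (\<lambda>x. poly \<phi> x * poly \<phi> x)" by (rule ext) simp
  have e2: "poly (q*\<phi>) = (\<lambda>x. poly q x * poly \<phi> x)" by (rule ext) simp
  have int_phi2: "integral {a..b} (poly (\<phi>*\<phi>)) = P" unfolding e1 using repr[OF degphi] by (simp add: P_def)
  have int_qphi: "integral {a..b} (poly (q*\<phi>)) = Q" unfolding e2 using repr[OF dq] by (simp add: Q_def)
  have e3: "poly (q*q) = (\<lambda>x. (poly q x)^2)" by (rule ext) (simp add: power2_eq_square)
  have int_q2: "integral {a..b} (poly (q*q)) = A" unfolding e3 A_def ..
  have "0 \<le> integral {a..b} (\<lambda>x. (Q * poly \<phi> x - P * poly q x)^2)"
    by (rule integral_nonneg) (auto intro!: integrable_continuous_interval continuous_intros)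
  also have "(\<lambda>x. (Q * poly \<phi> x - P * poly q x)^2) = (\<lambda>x. Q^2 * poly (\<phi>*\<phi>) x + (-2*Q*P) * poly (q*\<phi>) x + P^2 * poly (q*q) x)"
    by (auto simp: power2_eq_square algebra_simps)
  also have "integral {a..b} \<dots> = Q^2 * P + (-2*Q*P) * Q + P^2 * A"
    unfolding lincomb_integral int_phi2 int_qphi int_q2 ..
  finally have "0 \<le> P * (P * A - Q^2)" by (simp add: power2_eq_square algebra_simps)
  then have "Q^2 \<le> P * A" using Ppos by (simp add: zero_le_mult_iff)
  then show ?thesis unfolding Q_def P_def A_def phic .
qed

lemma nik_interior:
  assumes ab: "a < b" and x: "x \<in> {a..b}" and dq: "degree (q::real poly) \<le> n"
  shows "(poly q x)^2 \<le> 2 * (Suc n)^2/(b-a) * integral {a..b} (\<lambda>x. (poly q x)^2)"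
proof -
  have int: "\<And>u v. (\<lambda>x. (poly q x)^2) integrable_on {u..v}"
    by (auto intro!: integrable_continuous_interval continuous_intros)
  have K: "(Suc n)^2/(v-u) \<le> 2 * (Suc n)^2/(b-a)" if "2*(v-u) \<ge> b - a" "u < v" for u v :: real
  proof -
    have "(Suc n)^2/(v-u) = (2*(Suc n)^2)/(2*(v-u))" using that by (simp add: field_simps)
    also have "\<dots> \<le> (2*(Suc n)^2)/(b-a)" by (rule frac_le) (use that ab in auto)
    finally show ?thesis by simp
  qed
  show ?thesis
  proof (cases "2*(x-a) \<ge> b - a")
    case True
    then have "a < x" using ab by simp
    have "(poly q x)^2 \<le> (Suc n)^2/(x-a) * integral {a..x} (\<lambda>x. (poly q x)^2)"
      using nik_endpoint[OF \<open>a<x\<close> _ dq] by simp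
    also have "\<dots> \<le> 2 * (Suc n)^2/(b-a) * integral {a..b} (\<lambda>x. (poly q x)^2)"
      apply (rule mult_mono[OF K[OF True \<open>a<x\<close>]])
        apply (rule integral_subset_le) using x int by (auto intro!: integral_nonneg)
    finally show ?thesis .
  next
    case False
    then have xb: "x < b" "2*(b-x) \<ge> b-a" using ab x by auto
    have "(poly q x)^2 \<le> (Suc n)^2/(b-x) * integral {x..b} (\<lambda>x. (poly q x)^2)"
      using nik_endpoint[OF \<open>x<b\<close> _ dq] by simp
    also have "\<dots> \<le> 2 * (Suc n)^2/(b-a) * integral {a..b} (\<lambda>x. (poly q x)^2)"
      apply (rule mult_mono[OF K[OF xb(2) xb(1)]])
        apply (rule integral_subset_le) using x int by (auto intro!: integral_nonneg)
    finally show ?thesis .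
  qed
qed



lemma poly_meas[measurable]: "poly (R::real poly) \<in> borel_measurable borel"
  by (intro borel_measurable_continuous_onI continuous_intros)
lemma sing_meas[measurable]: "{c::real} \<in> sets borel" by simp

definition PP :: "nat \<Rightarrow> real \<Rightarrow> (real \<Rightarrow> real) \<Rightarrow> bool" where
 "PP p l u \<longleftrightarrow> (\<exists>N zeta R. zeta 0 = 0 \<and> zeta N = 1 \<and> (\<forall>j<N. l \<le> zeta (Suc j) - zeta j \<and>
     degree (R j) \<le> p \<and> (\<forall>t\<in>{zeta j..zeta (Suc j)}. u t = poly (R j) t)))"

lemma mesh_mono:
  assumes "\<forall>j<N. (zeta::nat\<Rightarrow>real) j < zeta (Suc j)" "j \<le> k" "k \<le> N" shows "zeta j \<le> zeta k"
  using assms(2,3)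
proof (induction k)
  case 0 then show ?case by simp
next
  case (Suc k)
  show ?case
  proof (cases "j = Suc k")
    case False
    then have "zeta j \<le> zeta k" using Suc by simp
    moreover have "zeta k < zeta (Suc k)" using assms(1) Suc by simp
    ultimately show ?thesis by simp
  qed simp
qed

lemma mesh_cover:
  assumes "\<forall>j<N. (zeta::nat\<Rightarrow>real) j < zeta (Suc j)" "zeta 0 \<le> t" "t < zeta N"
  shows "\<exists>j<N. zeta j \<le> t \<and> t < zeta (Suc j)"
  using assms
proof (induction N)
  case 0 then show ?case by simp
next
  case (Suc N)
  show ?case
  proof (cases "t < zeta N")
    case True
    then obtain j where "j<N" "zeta j \<le> t \<and> t < zeta (Suc j)" using Suc by auto
    then show ?thesis by (intro exI[of _ j]) auto
  next
    case False then show ?thesis using Suc.prems by (intro exI[of _ N]) auto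
  qed
qed

lemma mesh_disj:
  assumes "\<forall>j<N. (zeta::nat\<Rightarrow>real) j < zeta (Suc j)" "j < N" "k < N" "j \<noteq> k"
    "zeta j \<le> t" "t < zeta (Suc j)" "zeta k \<le> t" "t < zeta (Suc k)"
  shows False
proof (cases "j < k")
  case True
  then have "zeta (Suc j) \<le> zeta k" using mesh_mono[OF assms(1), of "Suc j" k] assms by simp
  then show False using assms by simp
next
  case False
  then have "zeta (Suc k) \<le> zeta j" using mesh_mono[OF assms(1), of "Suc k" j] assms by simp
  then show False using assms by simp
qed

lemma sum_single: "finite A \<Longrightarrow> j \<in> A \<Longrightarrow> (\<forall>k\<in>A. k \<noteq> j \<longrightarrow> f k = 0) \<Longrightarrow> sum f A = f j"
  by (simp add: sum.remove)

lemma elem_nn: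
  assumes ab: "a < b" "l \<le> b - a" "l > 0" and p: "p \<ge> 1" "degree R \<le> p" and s: "s \<in> {a<..<b}"
    and veq: "\<forall>t\<in>{a..b}. v t = poly R t"
  shows "ennreal ((poly (pderiv R) s)^2) \<le> ennreal (2 * real p^2 / l) *
     (\<integral>\<^sup>+ t. indicator {a..b} t * ennreal ((v s - v t)^2/(s-t)^2) \<partial>lborel)"
proof -
  define Q where "Q = synthetic_div R s"
  have degQ: "degree Q \<le> p - 1" unfolding Q_def degree_synthetic_div using p by simp
  have Rdec: "R = [:-s,1:] * Q + [:poly R s:]" unfolding Q_def by (rule synthetic_div_correct'[symmetric])
  have Qs: "poly Q s = poly (pderiv R) s"
  proof -
    have "pderiv R = [:-s,1:] * pderiv Q + Q * pderiv [:-s,1:]"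
      by (subst Rdec) (simp only: pderiv_add pderiv_mult pderiv_pCons pderiv_0, simp)
    moreover have "pderiv [:-s,1:] = (1::real poly)" by (simp add: pderiv_pCons)
    ultimately show ?thesis by simp
  qed
  have QT: "((poly R s - poly R t)/(s-t))^2 = (poly Q t)^2" if "t \<noteq> s" for t
  proof -
    have "poly R t = (t - s) * poly Q t + poly R s" by (subst Rdec) (simp add: left_diff_distrib)
    then have "poly R s - poly R t = (s - t) * poly Q t" by (simp add: algebra_simps)
    then show ?thesis using that by simp
  qed
  define I where "I = integral {a..b} (\<lambda>t. (poly Q t)^2)"
  have I0: "I \<ge> 0" unfolding I_def by (rule integral_nonneg) (auto intro!: integrable_continuous_interval continuous_intros)
  have "(poly (pderiv R) s)^2 \<le> 2 * (Suc (p-1))^2/(b-a) * I"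
    unfolding Qs[symmetric] I_def by (rule nik_interior[OF ab(1) _ degQ]) (use s in auto)
  also have "2 * (Suc (p-1))^2/(b-a) = 2 * real p^2/(b-a)" using p by simp
  also have "2 * real p^2/(b-a) \<le> 2 * real p^2 / l" by (rule frac_le) (use ab in auto)
  finally have ineq: "(poly (pderiv R) s)^2 \<le> 2 * real p^2 / l * I" using I0 by (meson mult_right_mono order_trans)
  have nn: "(\<integral>\<^sup>+ t. indicator {a..b} t * ennreal ((v s - v t)^2/(s-t)^2) \<partial>lborel) = ennreal I"
  proof -
    have "(\<integral>\<^sup>+ t. indicator {a..b} t * ennreal ((v s - v t)^2/(s-t)^2) \<partial>lborel)
       = (\<integral>\<^sup>+ t. ennreal (indicator {a..b} t * (poly Q t)^2) \<partial>lborel)"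
    proof (rule nn_integral_cong_AE)
      show "AE t in lborel. indicator {a..b} t * ennreal ((v s - v t)^2/(s-t)^2) = ennreal (indicator {a..b} t * (poly Q t)^2)"
        using AE_lborel_singleton[of s]
      proof eventually_elim
        fix t assume "t \<noteq> s"
        show "indicator {a..b} t * ennreal ((v s - v t)^2/(s-t)^2) = ennreal (indicator {a..b} t * (poly Q t)^2)"
        proof (cases "t \<in> {a..b}")
          case True
          then have "(v s - v t)^2/(s-t)^2 = (poly Q t)^2" using veq s QT[OF \<open>t\<noteq>s\<close>]
            by (simp add: power_divide)
          then show ?thesis using True by simp
        qed simp
      qed
    qed
    also have "\<dots> = ennreal I"
      unfolding I_def
      by (rule nn_integral_has_integral_lebesgue) (auto intro!: integrable_integral integrable_continuous_interval continuous_intros)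
    finally show ?thesis .
  qed
  show ?thesis unfolding nn using ineq I0 ab p
    by (simp add: ennreal_mult[symmetric] ennreal_le_iff)
qed



lemma key:
  assumes PP: "PP p l u" and l: "l > 0" and p: "p \<ge> 1"
  shows "(\<integral>\<^sup>+ t. indicator {0..1} t * ennreal ((deriv u t)^2) \<partial>lborel) \<le>
    ennreal (2 * real p^2 / l) * (\<integral>\<^sup>+ s. \<integral>\<^sup>+ t. indicator {0..1} s * indicator {0..1} t *
       ennreal ((u s - u t)^2 / (s-t)^2) \<partial>lborel \<partial>lborel)"
proof -
  obtain N zeta R where z0: "zeta 0 = 0" and zN: "zeta N = 1" and
    el: "\<forall>j<N. l \<le> zeta (Suc j) - zeta j \<and> degree (R j) \<le> p \<and> (\<forall>t\<in>{zeta j..zeta (Suc j)}. u t = poly (R j) t)"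
    using PP unfolding PP_def by blast
  have strict: "\<forall>j<N. zeta j < zeta (Suc j)" using el l by force
  have zrange: "0 \<le> zeta j \<and> zeta j \<le> 1" if "j \<le> N" for j
    using mesh_mono[OF strict, of 0 j] mesh_mono[OF strict, of j N] z0 zN that by auto
  define K where "K = 2 * real p^2 / l"
  define ut where "ut t = (\<Sum>j<N. indicator {zeta j..<zeta (Suc j)} t * poly (R j) t) + indicator {1} t * u 1" for t
  have ut_meas[measurable]: "ut \<in> borel_measurable borel" unfolding ut_def by measurable
  have ut_eq: "ut t = u t" if "t \<in> {0..1}" for t
  proof (cases "t = 1")
    case True
    have "indicator {zeta j..<zeta (Suc j)} t = (0::real)" if "j < N" for j
      using zrange[of "Suc j"] that True by (auto simp: indicator_def)
    then show ?thesis using True by (simp add: ut_def)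
  next
    case False
    then have "zeta 0 \<le> t" "t < zeta N" using that z0 zN by auto
    then obtain j where j: "j<N" "zeta j \<le> t" "t < zeta (Suc j)" using mesh_cover[OF strict] by blast
    have "(\<Sum>k<N. indicator {zeta k..<zeta (Suc k)} t * poly (R k) t) = indicator {zeta j..<zeta (Suc j)} t * poly (R j) t"
      apply (rule sum_single) using j mesh_disj[OF strict, of j _ t] by (auto simp: indicator_def)
    then show ?thesis using j el False by (auto simp: ut_def)
  qed
  define G where "G s t = ennreal ((ut s - ut t)^2 / (s-t)^2)" for s t
  define Op where "Op j = {zeta j<..<zeta (Suc j)}" for j
  define E where "E j = {zeta j..zeta (Suc j)}" for j
  have rhs: "(\<integral>\<^sup>+ s. \<integral>\<^sup>+ t. indicator {0..1} s * indicator {0..1} t * ennreal ((u s - u t)^2 / (s-t)^2) \<partial>lborel \<partial>lborel)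
     = (\<integral>\<^sup>+ s. indicator {0..1} s * (\<integral>\<^sup>+ t. indicator {0..1} t * G s t \<partial>lborel) \<partial>lborel)"
  proof (rule nn_integral_cong)
    fix s :: real
    show "(\<integral>\<^sup>+ t. indicator {0..1} s * indicator {0..1} t * ennreal ((u s - u t)^2 / (s-t)^2) \<partial>lborel)
       = indicator {0..1} s * (\<integral>\<^sup>+ t. indicator {0..1} t * G s t \<partial>lborel)"
    proof (cases "s \<in> {0..1}")
      case True
      show ?thesis using True
        by (simp, intro nn_integral_cong) (auto simp: G_def ut_eq indicator_def)
    qed simp
  qed
  have AEZ: "AE t in lborel. \<forall>z\<in>zeta ` {..N}. t \<noteq> z"
    by (rule AE_finite_allI) (auto intro: AE_lborel_singleton)
  have stepA: "(\<integral>\<^sup>+ t. indicator {0..1} t * ennreal ((deriv u t)^2) \<partial>lborel) \<le>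
     (\<integral>\<^sup>+ t. (\<Sum>j<N. indicator (Op j) t * ennreal ((poly (pderiv (R j)) t)^2)) \<partial>lborel)"
  proof (rule nn_integral_mono_AE)
    show "AE t in lborel. indicator {0..1} t * ennreal ((deriv u t)^2) \<le> (\<Sum>j<N. indicator (Op j) t * ennreal ((poly (pderiv (R j)) t)^2))"
      using AEZ
    proof eventually_elim
      fix t assume nz: "\<forall>z\<in>zeta ` {..N}. t \<noteq> z"
      show "indicator {0..1} t * ennreal ((deriv u t)^2) \<le> (\<Sum>j<N. indicator (Op j) t * ennreal ((poly (pderiv (R j)) t)^2))"
      proof (cases "t \<in> {0..1}")
        case True
        have "t \<noteq> zeta N" using nz by blast
        with True z0 zN have "zeta 0 \<le> t" "t < zeta N" by auto
        then obtain j where j: "j<N" "zeta j \<le> t" "t < zeta (Suc j)" using mesh_cover[OF strict] by blast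
        have "t \<noteq> zeta j" using nz j(1) by auto
        with j have jt: "zeta j < t" by auto
        have tO: "t \<in> Op j" using j jt by (simp add: Op_def)
        have "deriv u t = poly (pderiv (R j)) t"
        proof (rule DERIV_imp_deriv)
          show "(u has_real_derivative poly (pderiv (R j)) t) (at t)"
            by (rule has_field_derivative_transform_within_open[OF poly_DERIV _ tO])
               (use el j in \<open>auto simp: Op_def\<close>)
        qed
        then have "indicator {0..1} t * ennreal ((deriv u t)^2) = indicator (Op j) t * ennreal ((poly (pderiv (R j)) t)^2)"
          using True tO by simp
        also have "\<dots> \<le> (\<Sum>j<N. indicator (Op j) t * ennreal ((poly (pderiv (R j)) t)^2))"
          by (rule member_le_sum) (use j in auto)
        finally show ?thesis .
      qed simp
    qed
  qed
  also have "\<dots> = (\<Sum>j<N. \<integral>\<^sup>+ t. indicator (Op j) t * ennreal ((poly (pderiv (R j)) t)^2) \<partial>lborel)"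
    by (rule nn_integral_sum) (simp add: Op_def)
  also have "\<dots> \<le> (\<Sum>j<N. ennreal K * (\<integral>\<^sup>+ s. indicator (Op j) s * (\<integral>\<^sup>+ t. indicator (E j) t * G s t \<partial>lborel) \<partial>lborel))"
  proof (rule sum_mono)
    fix j assume "j \<in> {..<N}"
    then have j: "j < N" by simp
    have "(\<integral>\<^sup>+ t. indicator (Op j) t * ennreal ((poly (pderiv (R j)) t)^2) \<partial>lborel)
      \<le> (\<integral>\<^sup>+ s. ennreal K * (indicator (Op j) s * (\<integral>\<^sup>+ t. indicator (E j) t * G s t \<partial>lborel)) \<partial>lborel)"
    proof (rule nn_integral_mono)
      fix s
      show "indicator (Op j) s * ennreal ((poly (pderiv (R j)) s)^2) \<le> ennreal K * (indicator (Op j) s * (\<integral>\<^sup>+ t. indicator (E j) t * G s t \<partial>lborel))"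
      proof (cases "s \<in> Op j")
        case True
        have sub: "E j \<subseteq> {0..1}" using zrange[of j] zrange[of "Suc j"] j by (auto simp: E_def)
        have "ennreal ((poly (pderiv (R j)) s)^2) \<le> ennreal K * (\<integral>\<^sup>+ t. indicator (E j) t * ennreal ((ut s - ut t)^2/(s-t)^2) \<partial>lborel)"
          unfolding K_def E_def
          by (rule elem_nn[OF _ _ l p]) (use el j True sub ut_eq in \<open>auto simp: Op_def E_def\<close>)
        then show ?thesis using True by (simp add: G_def E_def)
      qed simp
    qed
    also have "\<dots> = ennreal K * (\<integral>\<^sup>+ s. indicator (Op j) s * (\<integral>\<^sup>+ t. indicator (E j) t * G s t \<partial>lborel) \<partial>lborel)"
      by (rule nn_integral_cmult) (simp add: Op_def E_def G_def)
    finally show "(\<integral>\<^sup>+ t. indicator (Op j) t * ennreal ((poly (pderiv (R j)) t)^2) \<partial>lborel)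
      \<le> ennreal K * (\<integral>\<^sup>+ s. indicator (Op j) s * (\<integral>\<^sup>+ t. indicator (E j) t * G s t \<partial>lborel) \<partial>lborel)" .
  qed
  also have "\<dots> = ennreal K * (\<integral>\<^sup>+ s. (\<Sum>j<N. indicator (Op j) s * (\<integral>\<^sup>+ t. indicator (E j) t * G s t \<partial>lborel)) \<partial>lborel)"
    by (subst nn_integral_sum) (auto simp: Op_def E_def G_def sum_distrib_left)
  also have "\<dots> \<le> ennreal K * (\<integral>\<^sup>+ s. indicator {0..1} s * (\<integral>\<^sup>+ t. indicator {0..1} t * G s t \<partial>lborel) \<partial>lborel)"
  proof (intro mult_left_mono nn_integral_mono)
    fix s
    show "(\<Sum>j<N. indicator (Op j) s * (\<integral>\<^sup>+ t. indicator (E j) t * G s t \<partial>lborel)) \<le> indicator {0..1} s * (\<integral>\<^sup>+ t. indicator {0..1} t * G s t \<partial>lborel)"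
    proof (cases "\<exists>j<N. s \<in> Op j")
      case True
      then obtain j where j: "j < N" "s \<in> Op j" by blast
      have sub: "E j \<subseteq> {0..1}" using zrange[of j] zrange[of "Suc j"] j by (auto simp: E_def)
      have s01: "s \<in> {0..1}" using sub j by (auto simp: Op_def E_def)
      have z: "\<forall>k\<in>{..<N}. k \<noteq> j \<longrightarrow> indicator (Op k) s * (\<integral>\<^sup>+ t. indicator (E k) t * G s t \<partial>lborel) = 0"
      proof (intro ballI impI)
        fix k assume k: "k \<in> {..<N}" "k \<noteq> j"
        have "s \<notin> Op k"
        proof
          assume "s \<in> Op k" then show False using mesh_disj[OF strict, of j k s] j k by (auto simp: Op_def)
        qed
        then show "indicator (Op k) s * (\<integral>\<^sup>+ t. indicator (E k) t * G s t \<partial>lborel) = 0" by simp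
      qed
      have "(\<Sum>j<N. indicator (Op j) s * (\<integral>\<^sup>+ t. indicator (E j) t * G s t \<partial>lborel)) = indicator (Op j) s * (\<integral>\<^sup>+ t. indicator (E j) t * G s t \<partial>lborel)"
        by (rule sum_single) (use j z in auto)
      also have "\<dots> = (\<integral>\<^sup>+ t. indicator (E j) t * G s t \<partial>lborel)" using j by simp
      also have "\<dots> \<le> (\<integral>\<^sup>+ t. indicator {0..1} t * G s t \<partial>lborel)"
        by (intro nn_integral_mono mult_right_mono) (use sub in \<open>auto simp: indicator_def\<close>)
      finally show ?thesis using s01 by simp
    next
      case False
      then have "(\<Sum>j<N. indicator (Op j) s * (\<integral>\<^sup>+ t. indicator (E j) t * G s t \<partial>lborel)) = 0" by simp
      then show ?thesis by simp
    qed
  qed simp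
  finally show ?thesis unfolding rhs K_def .
qed



lemma PP_cong: "PP p l u \<Longrightarrow> (\<forall>t\<in>{0..1}. u t = v t) \<Longrightarrow> l > 0 \<Longrightarrow> PP p l v"
proof -
  assume PP: "PP p l u" and eq: "\<forall>t\<in>{0..1}. u t = v t" and l: "l > 0"
  obtain N zeta R where z0: "zeta 0 = 0" and zN: "zeta N = 1" and
    el: "\<forall>j<N. l \<le> zeta (Suc j) - zeta j \<and> degree (R j) \<le> p \<and> (\<forall>t\<in>{zeta j..zeta (Suc j)}. u t = poly (R j) t)"
    using PP unfolding PP_def by blast
  have strict: "\<forall>j<N. zeta j < zeta (Suc j)" using el l by force
  have zrange: "0 \<le> zeta j \<and> zeta j \<le> 1" if "j \<le> N" for j
    using mesh_mono[OF strict, of 0 j] mesh_mono[OF strict, of j N] z0 zN that by auto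
  have "\<forall>j<N. l \<le> zeta (Suc j) - zeta j \<and> degree (R j) \<le> p \<and> (\<forall>t\<in>{zeta j..zeta (Suc j)}. v t = poly (R j) t)"
  proof (intro allI impI conjI ballI)
    fix j t assume j: "j < N" and t: "t \<in> {zeta j..zeta (Suc j)}"
    have "t \<in> {0..1}" using zrange[of j] zrange[of "Suc j"] j t by auto
    then have "u t = v t" using eq by auto
    moreover have "u t = poly (R j) t" using el j t by auto
    ultimately show "v t = poly (R j) t" by simp
  qed (use el in auto)
  then show ?thesis unfolding PP_def using z0 zN by blast
qed

lemma PP_reflect: assumes "PP p l u" shows "PP p l (\<lambda>t. u (1 - t))"
proof -
  obtain N zeta R where z0: "zeta 0 = 0" and zN: "zeta N = 1" and
    el: "\<forall>j<N. l \<le> zeta (Suc j) - zeta j \<and> degree (R j) \<le> p \<and> (\<forall>t\<in>{zeta j..zeta (Suc j)}. u t = poly (R j) t)"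
    using assms unfolding PP_def by blast
  define zeta' where "zeta' j = 1 - zeta (N - j)" for j
  define R' where "R' j = pcompose (R (N - Suc j)) [:1,-1:]" for j
  have "\<forall>j<N. l \<le> zeta' (Suc j) - zeta' j \<and> degree (R' j) \<le> p \<and> (\<forall>t\<in>{zeta' j..zeta' (Suc j)}. u (1 - t) = poly (R' j) t)"
  proof (intro allI impI conjI ballI)
    fix j assume j: "j < N"
    define k where "k = N - Suc j"
    have k: "k < N" "N - j = Suc k" "N - Suc j = k" using j by (auto simp: k_def)
    show "l \<le> zeta' (Suc j) - zeta' j" using el k by (simp add: zeta'_def)
    show "degree (R' j) \<le> p" unfolding R'_def using el k
      by (simp add: degree_pcompose)
    fix t assume t: "t \<in> {zeta' j..zeta' (Suc j)}"
    then have "1 - t \<in> {zeta k..zeta (Suc k)}" using k by (auto simp: zeta'_def)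
    then show "u (1 - t) = poly (R' j) t" using el k by (auto simp: R'_def poly_pcompose)
  qed
  moreover have "zeta' 0 = 0" "zeta' N = 1" using z0 zN by (auto simp: zeta'_def)
  ultimately show ?thesis unfolding PP_def by blast
qed

lemma PP_spline:
  fixes n :: nat
  assumes okv: "open_knot_vector p N z m" and mesh: "\<forall>i<N. l \<le> z (Suc i) - z i"
    and f: "\<forall>k<n. f k \<in> spline_space p N z m"
  shows "PP p l (\<lambda>x. \<Sum>k<n. c k * f k x)"
proof -
  have "\<forall>k. \<exists>P. k < n \<longrightarrow> (\<forall>i<N. degree (P i) \<le> p \<and> (\<forall>x\<in>{z i..z (Suc i)}. f k x = poly (P i) x))"
    using f unfolding spline_space_def by blast
  then obtain P where P: "\<And>k. k < n \<Longrightarrow> (\<forall>i<N. degree (P k i) \<le> p \<and> (\<forall>x\<in>{z i..z (Suc i)}. f k x = poly (P k i) x))"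
    by metis
  define R where "R i = (\<Sum>k<n. smult (c k) (P k i))" for i
  have "\<forall>j<N. l \<le> z (Suc j) - z j \<and> degree (R j) \<le> p \<and> (\<forall>t\<in>{z j..z (Suc j)}. (\<Sum>k<n. c k * f k t) = poly (R j) t)"
  proof (intro allI impI conjI ballI)
    fix j assume j: "j < N"
    show "l \<le> z (Suc j) - z j" using mesh j by auto
    have "degree (smult (c k) (P k j)) \<le> p" if "k \<in> {..<n}" for k
      using P[of k] j that degree_smult_le order.trans by fastforce
    then show "degree (R j) \<le> p" unfolding R_def
      using degree_sum_le[of "{..<n}" "\<lambda>k. smult (c k) (P k j)" p] by simp
    fix t assume "t \<in> {z j..z (Suc j)}"
    then show "(\<Sum>k<n. c k * f k t) = poly (R j) t" using P j by (simp add: R_def poly_sum)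
  qed
  moreover have "z 0 = 0" "z N = 1" using okv by (auto simp: open_knot_vector_def)
  ultimately show ?thesis unfolding PP_def by blast
qed

lemma edge_bdry: "i < 4 \<Longrightarrow> t \<in> {0..1} \<Longrightarrow> edge i t \<in> bdry"
  unfolding bdry_def by blast

lemma dist_edge: "(dist (edge i s) (edge i t))^2 = (s - t)^2"
proof -
  have e: "(1 - s - (1 - t))^2 = (s - t)^2" "(t - s)^2 = (s - t)^2" for s t :: real by (simp_all add: power2_eq_square algebra_simps)
  show ?thesis by (simp add: edge_def dist_Pair_Pair dist_real_def e)
qed



theorem mainTheorem3:
  fixes C3 :: real
  assumes "C3 > 0"
  shows "\<exists>c>0. \<forall>(p::nat) (h::real) N1 z1 m1 N2 z2 m2 w.
     p \<ge> 1 \<and> h > 0 \<and>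
     open_knot_vector p N1 z1 m1 \<and> open_knot_vector p N2 z2 m2 \<and>
     (\<forall>i<N1. C3 * h \<le> z1 (Suc i) - z1 i \<and> z1 (Suc i) - z1 i \<le> h) \<and>
     (\<forall>i<N2. C3 * h \<le> z2 (Suc i) - z2 i \<and> z2 (Suc i) - z2 i \<le> h) \<and>
     w \<in> trace_space p N1 z1 m1 N2 z2 m2
     \<longrightarrow> H1_bdry_sq w \<le> ennreal (c * real p ^ 2 / h) * H12_bdry_sq w"
proof (rule exI[of _ "2 / C3"], intro conjI allI impI)
  show "2 / C3 > 0" using assms by simp
  fix p :: nat and h :: real and N1 z1 m1 N2 z2 m2 w
  assume H: "p \<ge> 1 \<and> h > 0 \<and>
     open_knot_vector p N1 z1 m1 \<and> open_knot_vector p N2 z2 m2 \<and>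
     (\<forall>i<N1. C3 * h \<le> z1 (Suc i) - z1 i \<and> z1 (Suc i) - z1 i \<le> h) \<and>
     (\<forall>i<N2. C3 * h \<le> z2 (Suc i) - z2 i \<and> z2 (Suc i) - z2 i \<le> h) \<and>
     w \<in> trace_space p N1 z1 m1 N2 z2 m2"
  then have p: "p \<ge> 1" and h: "h > 0" and okv1: "open_knot_vector p N1 z1 m1"
    and okv2: "open_knot_vector p N2 z2 m2" and wT: "w \<in> trace_space p N1 z1 m1 N2 z2 m2" by auto
  define l where "l = C3 * h"
  have l: "l > 0" using assms h by (simp add: l_def)
  have m1: "\<forall>i<N1. l \<le> z1 (Suc i) - z1 i" using H by (simp add: l_def)
  have m2: "\<forall>i<N2. l \<le> z2 (Suc i) - z2 i" using H by (simp add: l_def)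
  obtain v where v: "v \<in> tp_spline_space p N1 z1 m1 N2 z2 m2" and wv: "\<forall>x\<in>bdry. w x = v x"
    using wT unfolding trace_space_def by blast
  obtain n :: nat and f g where fg: "\<forall>k<n. f k \<in> spline_space p N1 z1 m1 \<and> g k \<in> spline_space p N2 z2 m2"
    and vfg: "\<forall>x\<in>{0..1}. \<forall>y\<in>{0..1}. v (x, y) = (\<Sum>k<n. f k x * g k y)"
    using v unfolding tp_spline_space_def by blast
  have f: "\<forall>k<n. f k \<in> spline_space p N1 z1 m1" and g: "\<forall>k<n. g k \<in> spline_space p N2 z2 m2" using fg by auto
  have wedge: "w (edge i t) = v (edge i t)" if "i < 4" "t \<in> {0..1}" for i t using wv edge_bdry that by blast
  have PPall: "PP p l (\<lambda>s. w (edge i s))" if i: "i < 4" for i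
  proof -
    consider "i = 0" | "i = 1" | "i = 2" | "i = 3" using i by linarith
    then show ?thesis
    proof cases
      case 1
      have "PP p l (\<lambda>x. \<Sum>k<n. g k 0 * f k x)" by (rule PP_spline[OF okv1 m1 f])
      then show ?thesis
      proof (rule PP_cong[OF _ _ l], intro ballI)
        fix t :: real assume t: "t \<in> {0..1}"
        then show "(\<Sum>k<n. g k 0 * f k t) = w (edge i t)"
          using wedge[OF i t] vfg 1 by (simp add: edge_def mult.commute)
      qed
    next
      case 2
      have "PP p l (\<lambda>x. \<Sum>k<n. f k 1 * g k x)" by (rule PP_spline[OF okv2 m2 g])
      then show ?thesis
      proof (rule PP_cong[OF _ _ l], intro ballI)
        fix t :: real assume t: "t \<in> {0..1}"
        then show "(\<Sum>k<n. f k 1 * g k t) = w (edge i t)"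
          using wedge[OF i t] vfg 2 by (simp add: edge_def)
      qed
    next
      case 3
      have "PP p l (\<lambda>t. (\<lambda>x. \<Sum>k<n. g k 1 * f k x) (1 - t))" by (rule PP_reflect[OF PP_spline[OF okv1 m1 f]])
      then show ?thesis
      proof (rule PP_cong[OF _ _ l], intro ballI)
        fix t :: real assume t: "t \<in> {0..1}"
        then have "1 - t \<in> {0..1}" by auto
        then show "(\<lambda>x. \<Sum>k<n. g k 1 * f k x) (1 - t) = w (edge i t)"
          using wedge[OF i t] vfg 3 by (simp add: edge_def mult.commute)
      qed
    next
      case 4
      have "PP p l (\<lambda>t. (\<lambda>x. \<Sum>k<n. f k 0 * g k x) (1 - t))" by (rule PP_reflect[OF PP_spline[OF okv2 m2 g]])
      then show ?thesis
      proof (rule PP_cong[OF _ _ l], intro ballI)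
        fix t :: real assume t: "t \<in> {0..1}"
        then have "1 - t \<in> {0..1}" by auto
        then show "(\<lambda>x. \<Sum>k<n. f k 0 * g k x) (1 - t) = w (edge i t)"
          using wedge[OF i t] vfg 4 by (simp add: edge_def)
      qed
    qed
  qed
  define T where "T i j = (\<integral>\<^sup>+ s. \<integral>\<^sup>+ t.
      indicator {0..1} s * indicator {0..1} t *
      ennreal ((w (edge i s) - w (edge j t))\<^sup>2 / (dist (edge i s) (edge j t))\<^sup>2) \<partial>lborel \<partial>lborel)" for i j
  define K where "K = 2 * real p^2 / l"
  have Hi: "(\<integral>\<^sup>+ t. indicator {0..1} t * ennreal ((deriv (\<lambda>s. w (edge i s)) t)\<^sup>2) \<partial>lborel) \<le> ennreal K * T i i"
    if "i < 4" for i
    using key[OF PPall[OF that] l p] unfolding T_def K_def dist_edge .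
  have "H1_bdry_sq w \<le> (\<Sum>i<4. ennreal K * T i i)"
    unfolding H1_bdry_sq_def by (rule sum_mono) (use Hi in simp)
  also have "\<dots> = ennreal K * (\<Sum>i<4. T i i)" by (simp add: sum_distrib_left)
  also have "\<dots> \<le> ennreal K * (\<Sum>i<4. \<Sum>j<4. T i j)"
    by (intro mult_left_mono sum_mono member_le_sum) auto
  also have "(\<Sum>i<4. \<Sum>j<4. T i j) = H12_bdry_sq w" unfolding H12_bdry_sq_def T_def ..
  also have "K = 2 / C3 * real p ^ 2 / h" unfolding K_def l_def using assms h by (simp add: field_simps)
  finally show "H1_bdry_sq w \<le> ennreal (2 / C3 * real p ^ 2 / h) * H12_bdry_sq w" .
qed


end
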